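(* Let $t$ and $s$ be terms in the language of strong quasi-MV* algebras. Then $\mathbf{S^*}\models t\approx s$ if and only if $\mathbf{D^*}\models t\approx s$.
   Context: Terms in the language of strong quasi-MV* algebras are built from variables and constants $0,1$ using a binary operation $\oplus$ and unary operations $-,{}^+,{}^-$; $\mathbf{A}\models t\approx s$ means $t$ and $s$ take equal values under every assignment of variables in $\mathbf{A}$. $\mathbf{S^*}$ is the algebra with universe $S^*=[-1,1]\times[-1,1]\subseteq\mathbb{R}^2$ and operations $\langle a,b\rangle\oplus\langle c,d\rangle=\langle\max\{-1,\min\{1,a+c\}\},0\rangle$, $-\langle a,b\rangle=\langle -a,-b\rangle$, $\langle a,b\rangle^+=\langle\max\{0,a\},0\rangle$, $\langle a,b\rangle^-=\langle\min\{0,a\},0\rangle$, $0=\langle 0,0\rangle$, $1=\langle 1,0\rangle$. $\mathbf{D^*}$ is the subalgebra of $\mathbf{S^*}$ with universe $D^*=\{\langle a,b\rangle\in\mathbb{R}^2:a^2+b^2\le 1\}$. *)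

theory Defs
  imports Main "HOL.Real"
begin

datatype sqmv_term =
    Var nat
  | Zero
  | One
  | Oplus sqmv_term sqmv_term
  | Neg sqmv_term
  | Pos sqmv_term
  | NegPart sqmv_term

text \<open>Operations of S* (defined on all of real x real; S* and D* are obtained by
  restricting to the respective universes).\<close>
definition S_oplus :: "real \<times> real \<Rightarrow> real \<times> real \<Rightarrow> real \<times> real" where
  "S_oplus x y = (max (-1) (min 1 (fst x + fst y)), 0)"

definition S_neg :: "real \<times> real \<Rightarrow> real \<times> real" where
  "S_neg x = (- fst x, - snd x)"

definition S_pos :: "real \<times> real \<Rightarrow> real \<times> real" where
  "S_pos x = (max 0 (fst x), 0)"

definition S_negpart :: "real \<times> real \<Rightarrow> real \<times> real" where
  "S_negpart x = (min 0 (fst x), 0)"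

fun eval_S :: "(nat \<Rightarrow> real \<times> real) \<Rightarrow> sqmv_term \<Rightarrow> real \<times> real" where
  "eval_S v (Var i) = v i"
| "eval_S v Zero = (0, 0)"
| "eval_S v One = (1, 0)"
| "eval_S v (Oplus t u) = S_oplus (eval_S v t) (eval_S v u)"
| "eval_S v (Neg t) = S_neg (eval_S v t)"
| "eval_S v (Pos t) = S_pos (eval_S v t)"
| "eval_S v (NegPart t) = S_negpart (eval_S v t)"

definition Sstar :: "(real \<times> real) set" where
  "Sstar = {p. -1 \<le> fst p \<and> fst p \<le> 1 \<and> -1 \<le> snd p \<and> snd p \<le> 1}"

definition Dstar :: "(real \<times> real) set" where
  "Dstar = {p. (fst p)\<^sup>2 + (snd p)\<^sup>2 \<le> 1}"

definition models_eq :: "(real \<times> real) set \<Rightarrow> sqmv_term \<Rightarrow> sqmv_term \<Rightarrow> bool" where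
  "models_eq U t s \<longleftrightarrow> (\<forall>v. (\<forall>i. v i \<in> U) \<longrightarrow> eval_S v t = eval_S v s)"

end

theory Submission
  imports Defs
begin

lemma fst_dep: "(\<forall>i. fst (v i) = fst (w i)) \<Longrightarrow> fst (eval_S v t) = fst (eval_S w t)"
  by (induction t) (auto simp: S_oplus_def S_neg_def S_pos_def S_negpart_def)

lemma snd_dep: "(\<forall>i. snd (v i) = snd (w i)) \<Longrightarrow> snd (eval_S v t) = snd (eval_S w t)"
  by (induction t) (auto simp: S_oplus_def S_neg_def S_pos_def S_negpart_def)

theorem proposition3p3:
  fixes t s :: sqmv_term
  shows "models_eq Sstar t s \<longleftrightarrow> models_eq Dstar t s"
proof
  assume "models_eq Sstar t s"
  moreover have "Dstar \<subseteq> Sstar"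
  proof
    fix p :: "real \<times> real" assume "p \<in> Dstar"
    hence h: "(fst p)\<^sup>2 + (snd p)\<^sup>2 \<le> 1" by (simp add: Dstar_def)
    have "(fst p)\<^sup>2 \<le> 1" "(snd p)\<^sup>2 \<le> 1" using h zero_le_power2[of "fst p"] zero_le_power2[of "snd p"] by linarith+
    hence "\<bar>fst p\<bar> \<le> 1" "\<bar>snd p\<bar> \<le> 1" by (auto simp: abs_square_le_1)
    thus "p \<in> Sstar" by (auto simp: Sstar_def)
  qed
  ultimately show "models_eq Dstar t s" unfolding models_eq_def by blast
next
  assume D: "models_eq Dstar t s"
  show "models_eq Sstar t s" unfolding models_eq_def
  proof (intro allI impI)
    fix v :: "nat \<Rightarrow> real \<times> real" assume v: "\<forall>i. v i \<in> Sstar"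
    define v1 where "v1 = (\<lambda>i. (fst (v i), 0::real))"
    define v2 where "v2 = (\<lambda>i. (0::real, snd (v i)))"
    have sq: "x\<^sup>2 \<le> 1" if "-1 \<le> x" "x \<le> 1" for x :: real
      using that by (simp add: abs_square_le_1 abs_le_iff)
    have "\<forall>i. v1 i \<in> Dstar" using v sq by (auto simp: v1_def Dstar_def Sstar_def)
    hence e1: "eval_S v1 t = eval_S v1 s" using D by (simp add: models_eq_def)
    have "\<forall>i. v2 i \<in> Dstar" using v sq by (auto simp: v2_def Dstar_def Sstar_def)
    hence e2: "eval_S v2 t = eval_S v2 s" using D by (simp add: models_eq_def)
    have "fst (eval_S v t) = fst (eval_S v s)"
      using fst_dep[of v v1] e1 by (simp add: v1_def)
    moreover have "snd (eval_S v t) = snd (eval_S v s)"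
      using snd_dep[of v v2] e2 by (simp add: v2_def)
    ultimately show "eval_S v t = eval_S v s" by (simp add: prod_eq_iff)
  qed
qed

end
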